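(* Let $\prec$ be a coherent contextual order on $\widetilde{\Sigma}=\widetilde{\Sigma}_1\uplus\widetilde{\Sigma}_2$ (with $\widetilde{\Sigma}_1,\widetilde{\Sigma}_2$ disjoint visibly pushdown alphabets) and let $P_1,P_2$ be well-matched visibly pushdown languages over $\widetilde{\Sigma}_1,\widetilde{\Sigma}_2$ respectively. Then $\mathrm{red}_\prec(P_1\parallel P_2)\subseteq\mathsf{wn}(P_1\parallel P_2)$.
   Context: A visibly pushdown (VP) alphabet is a finite alphabet partitioned into calls $\Sigma^{\mathsf{call}}$, returns $\Sigma^{\mathsf{ret}}$ and internals $\Sigma^{\mathsf{int}}$; write $\Sigma^{\mathsf{call}}_i,\Sigma^{\mathsf{ret}}_i$ for those of $\widetilde{\Sigma}_i$. Calls and returns in a word are matched like opening and closing parentheses (internals ignored); unmatched calls/returns are pending; a word is well-matched if none are pending. A visibly pushdown language is one accepted by a visibly pushdown automaton (pushes one symbol on each call, pops on each return, stack unchanged on internals). Shuffle: $P_1\parallel P_2=\{w\in\widetilde{\Sigma}^*:\Pi_{\widetilde{\Sigma}_i}(w)\in P_i\}$ with $\Pi_{\widetilde{\Sigma}_i}$ erasing letters outside $\widetilde{\Sigma}_i$. A word is well-nested if every matched call–return pair consists of letters from the same $\widetilde{\Sigma}_k$; $\mathsf{wn}(L)$ is the set of well-nested words of $L$. $\mathbb{I}=\{(a,b):a\in\widetilde{\Sigma}_i,b\in\widetilde{\Sigma}_j,i\ne j\}$, $\equiv_{\mathbb{I}}$ the least reflexive transitive relation with $uabv\equiv_{\mathbb{I}}ubav$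 for $(a,b)\in\mathbb{I}$. A contextual order is a map $\prec$ from $\widetilde{\Sigma}^*$ to strict total orders on $\widetilde{\Sigma}$; it induces $\preceq$: $\sigma\preceq\rho$ iff $\sigma$ is a prefix of $\rho$ or $\sigma=\alpha a\beta$, $\rho=\alpha b\gamma$ with $a\prec_\alpha b$. $\mathrm{red}_\prec(L)=\{w\in L:\forall u\in L,(u\equiv_{\mathbb{I}}w\wedge u\preceq w)\Rightarrow u=w\}$. A contextual order $\prec$ is coherent if for every $u\in\widetilde{\Sigma}^*$ and $i\in\{1,2\}$: if $u$ has pending calls and the last pending call of $u$ is in $\Sigma^{\mathsf{call}}_i$, then $a\prec_u r$ for every $a\in\widetilde{\Sigma}_i$ and every $r\in\bigcup_{j\ne i}\Sigma^{\mathsf{ret}}_j$. *)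

theory Defs
  imports Main
begin

definition vp_alphabet :: "'a set \<Rightarrow> 'a set \<Rightarrow> 'a set \<Rightarrow> bool" where
  "vp_alphabet C R I \<longleftrightarrow> finite C \<and> finite R \<and> finite I \<and>
     C \<inter> R = {} \<and> C \<inter> I = {} \<and> R \<inter> I = {}"

inductive balanced :: "'a set \<Rightarrow> 'a set \<Rightarrow> 'a list \<Rightarrow> bool" for C R where
  bal_nil: "balanced C R []"
| bal_int: "a \<notin> C \<Longrightarrow> a \<notin> R \<Longrightarrow> balanced C R [a]"
| bal_nest: "c \<in> C \<Longrightarrow> r \<in> R \<Longrightarrow> balanced C R u \<Longrightarrow> balanced C R (c # u @ [r])"
| bal_app: "balanced C R u \<Longrightarrow> balanced C R v \<Longrightarrow> balanced C R (u @ v)"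

definition matched :: "'a set \<Rightarrow> 'a set \<Rightarrow> 'a list \<Rightarrow> nat \<Rightarrow> nat \<Rightarrow> bool" where
  "matched C R w i j \<longleftrightarrow> i < j \<and> j < length w \<and> w ! i \<in> C \<and> w ! j \<in> R \<and>
     balanced C R (take (j - i - 1) (drop (i + 1) w))"

definition pending_call :: "'a set \<Rightarrow> 'a set \<Rightarrow> 'a list \<Rightarrow> nat \<Rightarrow> bool" where
  "pending_call C R w i \<longleftrightarrow> i < length w \<and> w ! i \<in> C \<and> \<not> (\<exists>j. matched C R w i j)"

definition pending_return :: "'a set \<Rightarrow> 'a set \<Rightarrow> 'a list \<Rightarrow> nat \<Rightarrow> bool" where
  "pending_return C R w j \<longleftrightarrow> j < length w \<and> w ! j \<in> R \<and> \<not> (\<exists>i. matched C R w i j)"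

definition well_matched :: "'a set \<Rightarrow> 'a set \<Rightarrow> 'a list \<Rightarrow> bool" where
  "well_matched C R w \<longleftrightarrow> (\<forall>i. \<not> pending_call C R w i \<and> \<not> pending_return C R w i)"

text \<open>Configurations: (state, stack), stack top at the head. States and stack symbols are nat.\<close>
definition vpa_step ::
  "'a set \<Rightarrow> 'a set \<Rightarrow> 'a set \<Rightarrow> (nat \<times> 'a \<times> nat \<times> nat) set \<Rightarrow> (nat \<times> 'a \<times> nat \<times> nat) set
   \<Rightarrow> (nat \<times> 'a \<times> nat) set \<Rightarrow> nat \<times> nat list \<Rightarrow> 'a \<Rightarrow> nat \<times> nat list \<Rightarrow> bool" where
  "vpa_step C R I dc dr di cf a cf' \<longleftrightarrow>
     (a \<in> C \<and> (\<exists>g. (fst cf, a, fst cf', g) \<in> dc \<and> snd cf' = g # snd cf)) \<or>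
     (a \<in> R \<and> (\<exists>g. (fst cf, a, g, fst cf') \<in> dr \<and> snd cf = g # snd cf')) \<or>
     (a \<in> I \<and> (fst cf, a, fst cf') \<in> di \<and> snd cf' = snd cf)"
  \<comment> \<open>dc: (q, call, q', pushed symbol); dr: (q, return, popped symbol, q'); di: (q, internal, q')\<close>

fun vpa_run ::
  "'a set \<Rightarrow> 'a set \<Rightarrow> 'a set \<Rightarrow> (nat \<times> 'a \<times> nat \<times> nat) set \<Rightarrow> (nat \<times> 'a \<times> nat \<times> nat) set
   \<Rightarrow> (nat \<times> 'a \<times> nat) set \<Rightarrow> nat \<times> nat list \<Rightarrow> 'a list \<Rightarrow> nat \<times> nat list \<Rightarrow> bool" where
  "vpa_run C R I dc dr di cf [] cf' \<longleftrightarrow> cf' = cf"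
| "vpa_run C R I dc dr di cf (a # w) cf'' \<longleftrightarrow>
     (\<exists>cf'. vpa_step C R I dc dr di cf a cf' \<and> vpa_run C R I dc dr di cf' w cf'')"

definition vpl :: "'a set \<Rightarrow> 'a set \<Rightarrow> 'a set \<Rightarrow> 'a list set \<Rightarrow> bool" where
  "vpl C R I L \<longleftrightarrow> (\<exists>(Q::nat set) Q0 F (G::nat set) dc dr di.
     finite Q \<and> finite G \<and> Q0 \<subseteq> Q \<and> F \<subseteq> Q \<and>
     dc \<subseteq> Q \<times> C \<times> Q \<times> G \<and> dr \<subseteq> Q \<times> R \<times> G \<times> Q \<and> di \<subseteq> Q \<times> I \<times> Q \<and>
     L = {w. \<exists>q0\<in>Q0. \<exists>qf\<in>F. \<exists>s. vpa_run C R I dc dr di (q0, []) w (qf, s)})"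

definition shuffle :: "'a set \<Rightarrow> 'a set \<Rightarrow> 'a list set \<Rightarrow> 'a list set \<Rightarrow> 'a list set" where
  "shuffle S1 S2 P1 P2 = {w \<in> lists (S1 \<union> S2).
      filter (\<lambda>x. x \<in> S1) w \<in> P1 \<and> filter (\<lambda>x. x \<in> S2) w \<in> P2}"

definition indep :: "'a set \<Rightarrow> 'a set \<Rightarrow> ('a \<times> 'a) set" where
  "indep S1 S2 = {(a, b). (a \<in> S1 \<and> b \<in> S2) \<or> (a \<in> S2 \<and> b \<in> S1)}"

definition swap_step :: "('a \<times> 'a) set \<Rightarrow> 'a list \<Rightarrow> 'a list \<Rightarrow> bool" where
  "swap_step Ind u v \<longleftrightarrow> (\<exists>x y a b. (a, b) \<in> Ind \<and> u = x @ a # b # y \<and> v = x @ b # a # y)"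

definition trace_equiv :: "('a \<times> 'a) set \<Rightarrow> 'a list \<Rightarrow> 'a list \<Rightarrow> bool" where
  "trace_equiv Ind = (swap_step Ind)\<^sup>*\<^sup>*"

definition wn :: "'a set \<Rightarrow> 'a set \<Rightarrow> 'a set \<Rightarrow> 'a set \<Rightarrow> 'a list set \<Rightarrow> 'a list set" where
  "wn C R S1 S2 L = {w \<in> L. \<forall>i j. matched C R w i j \<longrightarrow>
      (w ! i \<in> S1 \<and> w ! j \<in> S1) \<or> (w ! i \<in> S2 \<and> w ! j \<in> S2)}"

definition contextual_order :: "'a set \<Rightarrow> ('a list \<Rightarrow> ('a \<times> 'a) set) \<Rightarrow> bool" where
  "contextual_order S ord \<longleftrightarrow>
     (\<forall>u \<in> lists S. ord u \<subseteq> S \<times> S \<and> strict_linear_order_on S (ord u))"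

definition ctx_le :: "('a list \<Rightarrow> ('a \<times> 'a) set) \<Rightarrow> 'a list \<Rightarrow> 'a list \<Rightarrow> bool" where
  "ctx_le ord \<sigma> \<rho> \<longleftrightarrow> (\<exists>z. \<rho> = \<sigma> @ z) \<or>
     (\<exists>\<alpha> a b \<beta> \<gamma>. \<sigma> = \<alpha> @ a # \<beta> \<and> \<rho> = \<alpha> @ b # \<gamma> \<and> (a, b) \<in> ord \<alpha>)"

definition red :: "('a list \<Rightarrow> ('a \<times> 'a) set) \<Rightarrow> ('a \<times> 'a) set \<Rightarrow> 'a list set \<Rightarrow> 'a list set" where
  "red ord Ind L = {w \<in> L. \<forall>u \<in> L. (trace_equiv Ind u w \<and> ctx_le ord u w) \<longrightarrow> u = w}"

definition coherent ::
  "'a set \<Rightarrow> 'a set \<Rightarrow> 'a set \<Rightarrow> 'a set \<Rightarrow> 'a set \<Rightarrow> 'a set \<Rightarrow> ('a list \<Rightarrow> ('a \<times> 'a) set) \<Rightarrow> bool" where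
  "coherent C1 R1 I1 C2 R2 I2 ord \<longleftrightarrow>
     (\<forall>u \<in> lists (C1 \<union> R1 \<union> I1 \<union> C2 \<union> R2 \<union> I2). \<forall>k.
        (pending_call (C1 \<union> C2) (R1 \<union> R2) u k \<and>
         (\<forall>k'. pending_call (C1 \<union> C2) (R1 \<union> R2) u k' \<longrightarrow> k' \<le> k)) \<longrightarrow>
        ((u ! k \<in> C1 \<longrightarrow> (\<forall>a \<in> C1 \<union> R1 \<union> I1. \<forall>r \<in> R2. (a, r) \<in> ord u)) \<and>
         (u ! k \<in> C2 \<longrightarrow> (\<forall>a \<in> C2 \<union> R2 \<union> I2. \<forall>r \<in> R1. (a, r) \<in> ord u))))"

end

theory Submission
  imports Defs
begin

definition cnt :: "'a set \<Rightarrow> 'a list \<Rightarrow> nat" where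
  "cnt A xs = length (filter (\<lambda>x. x \<in> A) xs)"

lemma cnt_simps[simp]: "cnt A [] = 0" "cnt A (x # xs) = (if x \<in> A then Suc (cnt A xs) else cnt A xs)"
  "cnt A (xs @ ys) = cnt A xs + cnt A ys"
  by (auto simp: cnt_def)

lemma bal_cnt:
  assumes "balanced C R v" "C \<inter> R = {}"
  shows "cnt C v = cnt R v \<and> (\<forall>n. cnt R (take n v) \<le> cnt C (take n v))"
  using assms(1)
proof induction
  case bal_nil then show ?case by simp
next
  case (bal_int a) then show ?case by (auto simp: take_Cons')
next
  case (bal_nest c r u)
  have "cnt R (take n (c # u @ [r])) \<le> cnt C (take n (c # u @ [r]))" for n
  proof (cases n)
    case (Suc m)
    show ?thesis
    proof (cases "m \<le> length u")
      case True
      have "cnt R (take m u) \<le> cnt C (take m u)" using bal_nest by blast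
      then have "cnt R (take m u) \<le> Suc (cnt C (take m u))" by simp
      then show ?thesis using Suc bal_nest assms(2) True by auto
    next
      case False
      then show ?thesis using Suc bal_nest assms(2) by auto
    qed
  qed simp
  then show ?case using bal_nest assms(2) by auto
next
  case (bal_app u v)
  have "cnt R (take n (u @ v)) \<le> cnt C (take n (u @ v))" for n
  proof (cases "n \<le> length u")
    case True
    then show ?thesis using bal_app by auto
  next
    case False
    then show ?thesis using bal_app by (auto simp: take_append)
  qed
  then show ?case using bal_app by auto
qed

lemma no_early:
  assumes "balanced C R v" "C \<inter> R = {}" "n < length v" "v ! n \<in> R" "balanced C R (take n v)"
  shows False
proof -
  have t: "take (Suc n) v = take n v @ [v ! n]" using assms(3) by (simp add: take_Suc_conv_app_nth)
  have "cnt R (take (Suc n) v) \<le> cnt C (take (Suc n) v)" using bal_cnt[OF assms(1,2)] by blast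
  moreover have "cnt C (take n v) = cnt R (take n v)" using bal_cnt[OF assms(5,2)] by blast
  ultimately show False using t assms(2,4) by (auto split: if_splits)
qed

lemma matched_embed:
  assumes "matched C R u p q"
  shows "matched C R (x @ u @ y) (p + length x) (q + length x)"
proof -
  have pq: "p < q" "q < length u" using assms by (auto simp: matched_def)
  have "take (q - p - 1) (drop (p + length x + 1) (x @ u @ y)) = take (q - p - 1) (drop (p + 1) u)"
    using pq by (simp add: drop_append take_append)
  then show ?thesis using assms pq by (auto simp: matched_def nth_append)
qed

lemma calls_matched:
  assumes "balanced C R v" "C \<inter> R = {}"
  shows "p < length v \<Longrightarrow> v ! p \<in> C \<Longrightarrow> \<exists>q. matched C R v p q"
  using assms(1)
proof (induction arbitrary: p)
  case bal_nil then show ?case by simp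
next
  case (bal_int a) then show ?case by simp
next
  case (bal_nest c r u)
  show ?case
  proof (cases p)
    case 0
    have "matched C R (c # u @ [r]) 0 (length u + 1)"
      using bal_nest by (simp add: matched_def nth_append)
    then show ?thesis using 0 by blast
  next
    case (Suc p')
    show ?thesis
    proof (cases "p' < length u")
      case True
      then have "u ! p' \<in> C" using bal_nest Suc by (simp add: nth_append)
      then obtain q where "matched C R u p' q" using bal_nest True by blast
      from matched_embed[OF this, of "[c]" "[r]"] show ?thesis using Suc by auto
    next
      case False
      then have "p' = length u" using bal_nest Suc by simp
      then have "(c # u @ [r]) ! p = r" using Suc by simp
      then show ?thesis using bal_nest assms(2) by auto
    qed
  qed
next
  case (bal_app u v)
  show ?case
  proof (cases "p < length u")
    case True
    then obtain q where "matched C R u p q" using bal_app by (auto simp: nth_append)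
    from matched_embed[OF this, of "[]" v] show ?thesis by auto
  next
    case False
    then have "p - length u < length v" "v ! (p - length u) \<in> C" using bal_app by (auto simp: nth_append)
    then obtain q where "matched C R v (p - length u) q" using bal_app by blast
    from matched_embed[OF this, of u "[]"] show ?thesis using False by auto
  qed
qed

lemma proj_bal:
  assumes "balanced C R v" "C = Ck \<union> Cl" "R = Rk \<union> Rl" "Ck \<subseteq> S" "Rk \<subseteq> S"
    "Cl \<subseteq> T" "Rl \<subseteq> T" "S \<inter> T = {}"
  shows "(\<forall>p q. matched C R v p q \<longrightarrow> (v!p \<in> S \<and> v!q \<in> S) \<or> (v!p \<in> T \<and> v!q \<in> T))
     \<Longrightarrow> balanced Ck Rk (filter (\<lambda>x. x \<in> S) v)"
  using assms(1)
proof induction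
  case bal_nil then show ?case by (simp add: balanced.bal_nil)
next
  case (bal_int a)
  then show ?case using assms by (auto intro: balanced.intros)
next
  case (bal_nest c r u)
  have "\<forall>p q. matched C R u p q \<longrightarrow> (u!p \<in> S \<and> u!q \<in> S) \<or> (u!p \<in> T \<and> u!q \<in> T)"
  proof (intro allI impI)
    fix p q assume m: "matched C R u p q"
    have pq: "p < length u" "q < length u" using m by (auto simp: matched_def)
    have m': "matched C R (c # u @ [r]) (Suc p) (Suc q)" using matched_embed[OF m, of "[c]" "[r]"] by simp
    have
      "((c # u @ [r])!(Suc p) \<in> S \<and> (c # u @ [r])!(Suc q) \<in> S) \<or> ((c # u @ [r])!(Suc p) \<in> T \<and> (c # u @ [r])!(Suc q) \<in> T)"
      using bal_nest.prems[rule_format, OF m'] .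
    then show "(u!p \<in> S \<and> u!q \<in> S) \<or> (u!p \<in> T \<and> u!q \<in> T)" using pq by (simp add: nth_append)
  qed
  then have IH: "balanced Ck Rk (filter (\<lambda>x. x \<in> S) u)" using bal_nest by blast
  have m0: "matched C R (c # u @ [r]) 0 (length u + 1)"
    using bal_nest by (simp add: matched_def nth_append)
  have cr: "(c \<in> S \<and> r \<in> S) \<or> (c \<in> T \<and> r \<in> T)" using bal_nest.prems[rule_format, OF m0] by (simp add: nth_append)
  show ?case
  proof (cases "c \<in> S")
    case True
    then have "r \<in> S" "c \<in> Ck" "r \<in> Rk" using cr bal_nest.hyps assms by auto
    then show ?thesis using IH True by (auto intro: balanced.bal_nest)
  next
    case False
    then have "r \<notin> S" using cr assms by auto
    then show ?thesis using IH False by simp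
  qed
next
  case (bal_app u v)
  have "\<forall>p q. matched C R u p q \<longrightarrow> (u!p \<in> S \<and> u!q \<in> S) \<or> (u!p \<in> T \<and> u!q \<in> T)"
  proof (intro allI impI)
    fix p q assume m: "matched C R u p q"
    have pq: "p < length u" "q < length u" using m by (auto simp: matched_def)
    from matched_embed[OF m, of "[]" v] bal_app.prems have
      "((u @ v)!p \<in> S \<and> (u @ v)!q \<in> S) \<or> ((u @ v)!p \<in> T \<and> (u @ v)!q \<in> T)"
      by auto
    then show "(u!p \<in> S \<and> u!q \<in> S) \<or> (u!p \<in> T \<and> u!q \<in> T)" using pq by (simp add: nth_append)
  qed
  moreover have "\<forall>p q. matched C R v p q \<longrightarrow> (v!p \<in> S \<and> v!q \<in> S) \<or> (v!p \<in> T \<and> v!q \<in> T)"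
  proof (intro allI impI)
    fix p q assume m: "matched C R v p q"
    have pq: "p < length v" "q < length v" using m by (auto simp: matched_def)
    from matched_embed[OF m, of u "[]"] bal_app.prems have
      "((u @ v)!(p + length u) \<in> S \<and> (u @ v)!(q + length u) \<in> S) \<or> ((u @ v)!(p + length u) \<in> T \<and> (u @ v)!(q + length u) \<in> T)"
      by auto
    then show "(v!p \<in> S \<and> v!q \<in> S) \<or> (v!p \<in> T \<and> v!q \<in> T)" using pq by (simp add: nth_append)
  qed
  ultimately show ?case using bal_app by (auto intro: balanced.bal_app)
qed

lemma decomp:
  assumes "i < j" "j < length w"
  shows "w = take i w @ w ! i # take (j - i - 1) (drop (i + 1) w) @ w ! j # drop (j + 1) w"
proof -
  have a: "w = take i w @ w ! i # drop (i + 1) w" using assms by (simp add: id_take_nth_drop)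
  have "drop (j - i - 1) (drop (i + 1) w) = drop j w" using assms by simp
  also have "\<dots> = w ! j # drop (j + 1) w" using assms by (simp add: Cons_nth_drop_Suc)
  finally have "drop (i + 1) w = take (j - i - 1) (drop (i + 1) w) @ w ! j # drop (j + 1) w"
    by (metis append_take_drop_id)
  then show ?thesis using a by simp
qed

lemma pending_last:
  assumes "matched C R w i j" "C \<inter> R = {}"
  shows "pending_call C R (take j w) i \<and> (\<forall>k. pending_call C R (take j w) k \<longrightarrow> k \<le> i)"
proof -
  define v where "v = take (j - i - 1) (drop (i + 1) w)"
  have ij: "i < j" "j < length w" "w ! i \<in> C" "w ! j \<in> R" and bv: "balanced C R v"
    using assms by (auto simp: matched_def v_def)
  have tj: "take j w = take (i + 1) w @ v"
    using take_add[of "i+1" "j-i-1" w] ij unfolding v_def by simp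
  have lv: "length v = j - i - 1" using ij by (simp add: v_def)
  have p1: "pending_call C R (take j w) i"
    unfolding pending_call_def
  proof (intro conjI notI)
    show "i < length (take j w)" using ij by simp
    show "take j w ! i \<in> C" using ij by simp
    assume "\<exists>q. matched C R (take j w) i q"
    then obtain q where m: "matched C R (take j w) i q" by blast
    then have q: "i < q" "q < j" "take j w ! q \<in> R"
      "balanced C R (take (q - i - 1) (drop (i + 1) (take j w)))" using ij by (auto simp: matched_def)
    have "drop (i + 1) (take j w) = v" using tj ij by simp
    then have "balanced C R (take (q - i - 1) v)" using q by simp
    moreover have "take j w ! q = v ! (q - i - 1)" unfolding tj using q ij by (simp add: nth_append)
    moreover have "q - i - 1 < length v" using lv q by simp
    ultimately show False using no_early[OF bv assms(2), of "q - i - 1"] q by auto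
  qed
  have p2: "k \<le> i" if pk: "pending_call C R (take j w) k" for k
  proof (rule ccontr)
    assume "\<not> k \<le> i"
    then have ki: "i < k" by simp
    have kj: "k < j" "take j w ! k \<in> C" using pk ij by (auto simp: pending_call_def)
    have vk: "v ! (k - i - 1) \<in> C" "k - i - 1 < length v" using kj tj ij ki lv
      by (auto simp: nth_append)
    obtain q where "matched C R v (k - i - 1) q" using calls_matched[OF bv assms(2) vk(2) vk(1)] by blast
    from matched_embed[OF this, of "take (i + 1) w" "[]"] have "matched C R (take j w) k (q + (i + 1))"
      using tj ki ij by simp
    then show False using pk by (auto simp: pending_call_def)
  qed
  show ?thesis using p1 p2 by blast
qed

lemma move_left:
  assumes "\<forall>x \<in> set ys. x \<in> T" "a \<in> S" "\<forall>a\<in>S. \<forall>b\<in>T. (a, b) \<in> Ind"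
  shows "trace_equiv Ind (pre @ a # ys @ suf) (pre @ ys @ a # suf)"
  using assms(1)
proof (induction ys arbitrary: pre)
  case Nil then show ?case by (simp add: trace_equiv_def)
next
  case (Cons b ys)
  have "swap_step Ind (pre @ a # b # ys @ suf) (pre @ b # a # ys @ suf)"
    using Cons.prems assms(2,3) unfolding swap_step_def by fastforce
  moreover have "trace_equiv Ind ((pre @ [b]) @ a # ys @ suf) ((pre @ [b]) @ ys @ a # suf)"
    using Cons.IH[of "pre @ [b]"] Cons.prems by simp
  ultimately show ?case unfolding trace_equiv_def
    by (simp add: converse_rtranclp_into_rtranclp)
qed

lemma core:
  assumes ST: "S \<inter> T = {}" and CC: "C = Ck \<union> Cl" and RR: "R = Rk \<union> Rl"
    and sub: "Ck \<subseteq> S" "Rk \<subseteq> S" "Cl \<subseteq> T" "Rl \<subseteq> T"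
    and disj: "Ck \<inter> Rk = {}" "Cl \<inter> Rl = {}"
    and wl: "w \<in> lists (S \<union> T)"
    and wm: "well_matched Ck Rk (filter (\<lambda>x. x \<in> S) w)"
    and m: "matched C R w i j" and mi: "w ! i \<in> Ck" and mj: "w ! j \<in> Rl"
    and mini: "\<forall>p q. matched C R w p q \<and> q < j \<longrightarrow> (w!p \<in> S \<and> w!q \<in> S) \<or> (w!p \<in> T \<and> w!q \<in> T)"
    and coh: "\<forall>a\<in>S. \<forall>r\<in>Rl. (a, r) \<in> ord (take j w)"
    and ind: "\<forall>a\<in>S. \<forall>b\<in>T. (a, b) \<in> Ind"
  shows "\<exists>u. trace_equiv Ind u w \<and> ctx_le ord u w \<and> u \<noteq> w \<and> u \<in> lists (S \<union> T) \<and>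
     filter (\<lambda>x. x \<in> S) u = filter (\<lambda>x. x \<in> S) w \<and> filter (\<lambda>x. x \<in> T) u = filter (\<lambda>x. x \<in> T) w"
proof -
  have CR: "C \<inter> R = {}" using ST CC RR sub disj by blast
  define v where "v = take (j - i - 1) (drop (i + 1) w)"
  define d where "d = drop (j + 1) w"
  have ij: "i < j" "j < length w" and bv: "balanced C R v"
    using m by (auto simp: matched_def v_def)
  define x where "x = take i w @ [w ! i]"
  have lx: "length x = i + 1" using ij by (simp add: x_def)
  have wd: "w = x @ v @ (w ! j # d)" using decomp[OF ij] unfolding x_def v_def d_def by simp
  have lv: "length v = j - i - 1" using ij by (simp add: v_def)
  have wiS: "w ! i \<in> S" using mi sub by blast
  have wjS: "w ! j \<notin> S" using mj sub ST by blast
  have wjT: "w ! j \<in> T" using mj sub by blast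
  have vS: "balanced Ck Rk (filter (\<lambda>x. x \<in> S) v)"
  proof (rule proj_bal[OF bv CC RR sub ST])
    show "\<forall>p q. matched C R v p q \<longrightarrow> (v!p \<in> S \<and> v!q \<in> S) \<or> (v!p \<in> T \<and> v!q \<in> T)"
    proof (intro allI impI)
      fix p q assume mv: "matched C R v p q"
      have pq: "p < length v" "q < length v" using mv by (auto simp: matched_def)
      have "matched C R (x @ v @ (w ! j # d)) (p + length x) (q + length x)"
        by (rule matched_embed[OF mv])
      then have mw: "matched C R w (p + length x) (q + length x)" using wd by simp
      have "q + length x < j" using pq lv lx by simp
      then have "(w!(p + length x) \<in> S \<and> w!(q + length x) \<in> S) \<or> (w!(p + length x) \<in> T \<and> w!(q + length x) \<in> T)"
        using mini mw by blast
      moreover have "w!(p + length x) = v ! p" "w!(q + length x) = v ! q"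
        using pq by (subst wd, simp add: nth_append)+
      ultimately show "(v!p \<in> S \<and> v!q \<in> S) \<or> (v!p \<in> T \<and> v!q \<in> T)" by simp
    qed
  qed
  have "\<exists>a\<in>set d. a \<in> S"
  proof (rule ccontr)
    assume nd: "\<not> (\<exists>a\<in>set d. a \<in> S)"
    have fd: "filter (\<lambda>x. x \<in> S) d = []" using nd by (simp add: filter_empty_conv)
    define fx where "fx = filter (\<lambda>x. x \<in> S) (take i w)"
    define y where "y = filter (\<lambda>x. x \<in> S) v"
    have fw: "filter (\<lambda>x. x \<in> S) w = fx @ w ! i # y"
      using wiS wjS fd unfolding fx_def y_def by (subst wd, simp add: x_def)
    have "\<not> pending_call Ck Rk (filter (\<lambda>x. x \<in> S) w) (length fx)"
      using wm by (simp add: well_matched_def)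
    then obtain q where mq: "matched Ck Rk (fx @ w ! i # y) (length fx) q"
      using mi unfolding fw pending_call_def by (auto simp: nth_append)
    then have q: "length fx < q" "q < length fx + 1 + length y" "(fx @ w ! i # y) ! q \<in> Rk"
      "balanced Ck Rk (take (q - length fx - 1) (drop (length fx + 1) (fx @ w ! i # y)))"
      by (auto simp: matched_def)
    have e1: "drop (length fx + 1) (fx @ w ! i # y) = y" by simp
    have e2: "(fx @ w ! i # y) ! q = y ! (q - length fx - 1)" using q(1)
      by (simp add: nth_append)
    have "q - length fx - 1 < length y" using q by simp
    then show False using no_early[OF vS[folded y_def] disj(1)] q e1 e2 by auto
  qed
  then obtain y1 a z where dd: "d = y1 @ a # z" and aS: "a \<in> S" and y1: "\<forall>x\<in>set y1. \<not> x \<in> S"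
    using split_list_first_prop[of d "\<lambda>x. x \<in> S"] by blast
  have "set d \<subseteq> set w" unfolding d_def by (rule set_drop_subset)
  then have y1T: "\<forall>x\<in>set (w ! j # y1). x \<in> T" using wl y1 wjT dd by auto
  define \<alpha> where "\<alpha> = take j w"
  have wa: "w = \<alpha> @ w ! j # d" unfolding \<alpha>_def d_def using ij by (simp add: id_take_nth_drop)
  define u where "u = \<alpha> @ a # (w ! j # y1) @ z"
  have "trace_equiv Ind u w"
    unfolding u_def using move_left[OF y1T aS ind, of \<alpha> z] wa dd by simp
  moreover have "ctx_le ord u w"
    unfolding ctx_le_def using coh aS mj wa unfolding u_def \<alpha>_def by blast
  moreover have "u \<noteq> w" proof assume "u = w" then have "\<alpha> @ a # w ! j # y1 @ z = \<alpha> @ w ! j # d" using wa unfolding u_def by simp then show False using aS wjS by auto qed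
  moreover have "set w = set (\<alpha> @ w ! j # d)" using arg_cong[OF wa, of set] . then have "set u = set w" by (auto simp: u_def dd) then have "u \<in> lists (S \<union> T)" using wl by auto
  moreover have "filter (\<lambda>x. x \<in> S) u = filter (\<lambda>x. x \<in> S) w"
    using arg_cong[OF wa, of "filter (\<lambda>x. x \<in> S)"] dd y1 wjS aS unfolding u_def by (simp add: filter_empty_conv)
  moreover have "filter (\<lambda>x. x \<in> T) u = filter (\<lambda>x. x \<in> T) w"
    using arg_cong[OF wa, of "filter (\<lambda>x. x \<in> T)"] dd y1T aS ST unfolding u_def by auto
  ultimately show ?thesis by blast
qed

theorem proposition3p17:
  fixes C1 R1 I1 C2 R2 I2 :: "'a set"
    and ord :: "'a list \<Rightarrow> ('a \<times> 'a) set"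
    and P1 P2 :: "'a list set"
  assumes "vp_alphabet C1 R1 I1"
    and "vp_alphabet C2 R2 I2"
    and "(C1 \<union> R1 \<union> I1) \<inter> (C2 \<union> R2 \<union> I2) = {}"
    and "contextual_order (C1 \<union> R1 \<union> I1 \<union> C2 \<union> R2 \<union> I2) ord"
    and "coherent C1 R1 I1 C2 R2 I2 ord"
    and "vpl C1 R1 I1 P1" and "\<forall>w \<in> P1. well_matched C1 R1 w"
    and "vpl C2 R2 I2 P2" and "\<forall>w \<in> P2. well_matched C2 R2 w"
  shows "red ord (indep (C1 \<union> R1 \<union> I1) (C2 \<union> R2 \<union> I2))
            (shuffle (C1 \<union> R1 \<union> I1) (C2 \<union> R2 \<union> I2) P1 P2)
         \<subseteq> wn (C1 \<union> C2) (R1 \<union> R2) (C1 \<union> R1 \<union> I1) (C2 \<union> R2 \<union> I2)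
            (shuffle (C1 \<union> R1 \<union> I1) (C2 \<union> R2 \<union> I2) P1 P2)"
proof
  define S1 where "S1 = C1 \<union> R1 \<union> I1"
  define S2 where "S2 = C2 \<union> R2 \<union> I2"
  define C where "C = C1 \<union> C2"
  define R where "R = R1 \<union> R2"
  note defs = S1_def[symmetric] S2_def[symmetric] C_def[symmetric] R_def[symmetric]
  have ST: "S1 \<inter> S2 = {}" using assms(3) unfolding defs .
  have d1: "C1 \<inter> R1 = {}" using assms(1) by (simp add: vp_alphabet_def)
  have d2: "C2 \<inter> R2 = {}" using assms(2) by (simp add: vp_alphabet_def)
  have CR: "C \<inter> R = {}" using ST d1 d2 unfolding S1_def S2_def C_def R_def by blast
  have ind: "\<forall>a\<in>S1. \<forall>b\<in>S2. (a, b) \<in> indep S1 S2" "\<forall>a\<in>S2. \<forall>b\<in>S1. (a, b) \<in> indep S1 S2"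
    by (auto simp: indep_def)
  have U: "C1 \<union> R1 \<union> I1 \<union> C2 \<union> R2 \<union> I2 = S1 \<union> S2" unfolding S1_def S2_def by blast
  have coh: "\<forall>u \<in> lists (S1 \<union> S2). \<forall>k.
        (pending_call C R u k \<and> (\<forall>k'. pending_call C R u k' \<longrightarrow> k' \<le> k)) \<longrightarrow>
        ((u ! k \<in> C1 \<longrightarrow> (\<forall>a \<in> S1. \<forall>r \<in> R2. (a, r) \<in> ord u)) \<and>
         (u ! k \<in> C2 \<longrightarrow> (\<forall>a \<in> S2. \<forall>r \<in> R1. (a, r) \<in> ord u)))"
    using assms(5) unfolding coherent_def U unfolding defs .
  fix w
  assume wr: "w \<in> red ord (indep S1 S2) (shuffle S1 S2 P1 P2)"
  then have wsh: "w \<in> shuffle S1 S2 P1 P2" by (simp add: red_def)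
  then have wl: "w \<in> lists (S1 \<union> S2)" and f1: "filter (\<lambda>x. x \<in> S1) w \<in> P1"
    and f2: "filter (\<lambda>x. x \<in> S2) w \<in> P2" by (auto simp: shuffle_def)
  have wm1: "well_matched C1 R1 (filter (\<lambda>x. x \<in> S1) w)" using assms(7) f1 by blast
  have wm2: "well_matched C2 R2 (filter (\<lambda>x. x \<in> S2) w)" using assms(9) f2 by blast
  have nored: False if "trace_equiv (indep S1 S2) u w" "ctx_le ord u w" "u \<noteq> w" "u \<in> lists (S1 \<union> S2)"
     "filter (\<lambda>x. x \<in> S1) u = filter (\<lambda>x. x \<in> S1) w" "filter (\<lambda>x. x \<in> S2) u = filter (\<lambda>x. x \<in> S2) w"
     for u
  proof -
    have "u \<in> shuffle S1 S2 P1 P2" using that f1 f2 by (simp add: shuffle_def)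
    then show False using wr that by (auto simp: red_def)
  qed
  let ?same = "\<lambda>i j. (w ! i \<in> S1 \<and> w ! j \<in> S1) \<or> (w ! i \<in> S2 \<and> w ! j \<in> S2)"
  show "w \<in> wn C R S1 S2 (shuffle S1 S2 P1 P2)"
  proof (rule ccontr)
    assume "w \<notin> wn C R S1 S2 (shuffle S1 S2 P1 P2)"
    then have "\<exists>j i. matched C R w i j \<and> \<not> ?same i j" using wsh by (auto simp: wn_def)
    then obtain j where bj: "\<exists>i. matched C R w i j \<and> \<not> ?same i j"
      and minj: "\<forall>j'<j. \<not> (\<exists>i. matched C R w i j' \<and> \<not> ?same i j')"
      using exists_least_iff[of "\<lambda>j. \<exists>i. matched C R w i j \<and> \<not> ?same i j"] by blast
    obtain i where m: "matched C R w i j" and ns: "\<not> ?same i j" using bj by blast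
    have mini: "\<forall>p q. matched C R w p q \<and> q < j \<longrightarrow> ?same p q" using minj by blast
    have ij: "i < j" "w ! i \<in> C" "w ! j \<in> R" using m by (auto simp: matched_def)
    have pend: "pending_call C R (take j w) i \<and> (\<forall>k. pending_call C R (take j w) k \<longrightarrow> k \<le> i)"
      using pending_last[OF m CR] .
    have tl: "take j w \<in> lists (S1 \<union> S2)" using wl by (meson in_set_takeD in_listsD in_listsI)
    have ti: "take j w ! i = w ! i" using ij by simp
    have cj: "(w ! i \<in> C1 \<longrightarrow> (\<forall>a \<in> S1. \<forall>r \<in> R2. (a, r) \<in> ord (take j w))) \<and>
         (w ! i \<in> C2 \<longrightarrow> (\<forall>a \<in> S2. \<forall>r \<in> R1. (a, r) \<in> ord (take j w)))"
      using coh tl pend ti by metis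
    show False
    proof (cases "w ! i \<in> C1")
      case True
      then have "w ! j \<in> R2" using ij ns unfolding S1_def R_def by blast
      from core[OF ST C_def R_def _ _ _ _ d1 d2 wl wm1 m True this mini] cj True ind(1) nored
      show False unfolding S1_def S2_def by blast
    next
      case False
      then have wi2: "w ! i \<in> C2" using ij C_def by blast
      then have "w ! j \<in> R1" using ij ns unfolding S2_def R_def by blast
      moreover have "C = C2 \<union> C1" "R = R2 \<union> R1" unfolding C_def R_def by blast+
      moreover have "w \<in> lists (S2 \<union> S1)" using wl by (simp add: Un_commute)
      moreover have "S2 \<inter> S1 = {}" using ST by blast
      moreover have "\<forall>p q. matched C R w p q \<and> q < j \<longrightarrow> (w!p \<in> S2 \<and> w!q \<in> S2) \<or> (w!p \<in> S1 \<and> w!q \<in> S1)"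
        using mini by blast
      ultimately have "\<exists>u. trace_equiv (indep S1 S2) u w \<and> ctx_le ord u w \<and> u \<noteq> w \<and> u \<in> lists (S2 \<union> S1) \<and>
         filter (\<lambda>x. x \<in> S2) u = filter (\<lambda>x. x \<in> S2) w \<and> filter (\<lambda>x. x \<in> S1) u = filter (\<lambda>x. x \<in> S1) w"
        using core[of S2 S1 C C2 C1 R R2 R1 w i j ord "indep S1 S2"] d1 d2 wm2 m wi2 cj ind(2)
        unfolding S1_def S2_def by blast
      then show False using nored by (auto simp: Un_commute)
    qed
  qed
qed

end
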